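(* For $n,k,f\geqslant 0$ let $\mathfrak{j}_{n,k,f}$ be the number of words $\omega$ of length $n$ over the alphabet $\{0,\dots,k-1\}$ avoiding both $010$ and $110$ with $\mathrm{forb}(\omega,\{010,110\})=f$ (the empty word has $\mathrm{forb}=0$), and let $\mathfrak{k}_{n,k}=\sum_{f}\mathfrak{j}_{n,k,f}$ be the number of words of length $n$ over $\{0,\dots,k-1\}$ avoiding $010$ and $110$. Then for all $n\geqslant1$ and $k,f\geqslant0$, $$\mathfrak{j}_{n,k,f}=\sum_{p=1}^{n}\sum_{i=0}^{f-1}\sum_{m=0}^{k-1}\mathfrak{j}_{p-1,m,i}\cdot\Bigl(\mathfrak{j}_{n-p,\,m-i,\,f-i-1}+\delta_{f,m+1}\sum_{\ell=0}^{n-p-1}\mathfrak{k}_{\ell,\,m-i}\Bigr).$$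
   Context: $\delta_{a,b}$ is the Kronecker delta. A word contains a pattern $p$ if some subsequence is order-isomorphic to $p$; otherwise it avoids $p$. Avoiding $010$: no $i<j<l$ with $\omega_i=\omega_l<\omega_j$. Avoiding $110$: no $i<j<l$ with $\omega_i=\omega_j>\omega_l$. For a nonempty sequence $\omega$ avoiding a set of patterns $P$, a value $v\in\{0,\dots,\max(\omega)\}$ is forbidden if $\omega$ followed by $M$ and then $v$ contains some pattern of $P$, where $M>\max(\omega)$; $\mathrm{forb}(\omega,P)$ is the number of forbidden values. *)

theory Defs
  imports Main "HOL-Library.Sublist"
begin

definition order_iso :: "nat list \<Rightarrow> nat list \<Rightarrow> bool" where
  "order_iso u p \<longleftrightarrow> length u = length p \<and>
     (\<forall>a < length p. \<forall>b < length p. (u ! a < u ! b \<longleftrightarrow> p ! a < p ! b))"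

definition contains :: "nat list \<Rightarrow> nat list \<Rightarrow> bool" where
  "contains w p \<longleftrightarrow> (\<exists>u. subseq u w \<and> order_iso u p)"

definition avoids :: "nat list \<Rightarrow> nat list \<Rightarrow> bool" where
  "avoids w p \<longleftrightarrow> \<not> contains w p"

text \<open>forb(w,P); we take M = max(w)+1 (any M > max(w) gives the same result);
the empty word has forb = 0.\<close>
definition forb :: "nat list \<Rightarrow> nat list set \<Rightarrow> nat" where
  "forb w P = (if w = [] then 0 else
     card {v. v \<le> Max (set w) \<and> (\<exists>p\<in>P. contains (w @ [Suc (Max (set w)), v]) p)})"

definition P010_110 :: "nat list set" where
  "P010_110 = {[0,1,0], [1,1,0]}"

definition jj :: "nat \<Rightarrow> nat \<Rightarrow> nat \<Rightarrow> nat" where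
  "jj n k f = card {w. length w = n \<and> set w \<subseteq> {..<k} \<and>
      avoids w [0,1,0] \<and> avoids w [1,1,0] \<and> forb w P010_110 = f}"

definition kk :: "nat \<Rightarrow> nat \<Rightarrow> nat" where
  "kk n k = card {w. length w = n \<and> set w \<subseteq> {..<k} \<and>
      avoids w [0,1,0] \<and> avoids w [1,1,0]}"

end

theory Submission
  imports Defs "HOL-Library.Sublist"
begin



definition has010 :: "nat list \<Rightarrow> bool" where
  "has010 w \<longleftrightarrow> (\<exists>i j l. i<j \<and> j<l \<and> l<length w \<and> w!i = w!l \<and> w!i < w!j)"
definition has110 :: "nat list \<Rightarrow> bool" where
  "has110 w \<longleftrightarrow> (\<exists>i j l. i<j \<and> j<l \<and> l<length w \<and> w!i = w!j \<and> w!l < w!i)"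
definition ok :: "nat list \<Rightarrow> bool" where
  "ok w \<longleftrightarrow> \<not> has010 w \<and> \<not> has110 w"
definition rep :: "nat list \<Rightarrow> nat set" where
  "rep w = {v. \<exists>i j. i<j \<and> j<length w \<and> w!i = w!j \<and> v < w!i}"
definition Fs :: "nat list \<Rightarrow> nat set" where
  "Fs w = set w \<union> rep w"

lemma subseq_Cons_iff_nth:
  "subseq (x#xs) ys \<longleftrightarrow> (\<exists>i<length ys. ys!i = x \<and> subseq xs (drop (Suc i) ys))"
proof
  assume "subseq (x#xs) ys"
  then obtain us v vs where "ys = us @ v # vs" "x = v" "subseq xs vs"
    using list_emb_ConsD[OF \<open>subseq (x#xs) ys\<close>] by auto
  then show "\<exists>i<length ys. ys!i = x \<and> subseq xs (drop (Suc i) ys)"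
    by (intro exI[of _ "length us"]) auto
next
  assume "\<exists>i<length ys. ys!i = x \<and> subseq xs (drop (Suc i) ys)"
  then obtain i where i: "i < length ys" "ys!i = x" "subseq xs (drop (Suc i) ys)" by blast
  have "ys = take i ys @ ys!i # drop (Suc i) ys" using i(1) by (simp add: id_take_nth_drop)
  moreover have "subseq (x#xs) (ys!i # drop (Suc i) ys)" using i by simp
  then have "subseq (x#xs) (take i ys @ ys!i # drop (Suc i) ys)" by (rule list_emb_append2)
  with \<open>ys = _\<close> show "subseq (x#xs) ys" by simp
qed

lemma subseq3:
  "subseq [a,b,c] w \<longleftrightarrow> (\<exists>i j l. i<j \<and> j<l \<and> l<length w \<and> w!i=a \<and> w!j=b \<and> w!l=c)"
proof
  assume "subseq [a,b,c] w"
  from this[unfolded subseq_Cons_iff_nth[of a "[b,c]" w]]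
  obtain i where i: "i<length w" "w!i = a" "subseq [b,c] (drop (Suc i) w)"
    by (elim exE conjE)
  from i(3)[unfolded subseq_Cons_iff_nth[of b "[c]"]]
  obtain j where j: "j < length (drop (Suc i) w)" "drop (Suc i) w ! j = b"
     "subseq [c] (drop (Suc j) (drop (Suc i) w))"
    by (elim exE conjE)
  from j(3)[unfolded subseq_singleton_left in_set_conv_nth]
  obtain l where l: "l < length (drop (Suc j) (drop (Suc i) w))" "drop (Suc j) (drop (Suc i) w) ! l = c"
    by (elim exE conjE)
  have 1: "Suc i + j < length w" "w ! (Suc i + j) = b" using j i(1) by auto
  have 2: "Suc (Suc i + j) + l < length w" "w ! (Suc (Suc i + j) + l) = c" using l 1 by (auto simp: add_ac)
  show "\<exists>i j l. i<j \<and> j<l \<and> l<length w \<and> w!i=a \<and> w!j=b \<and> w!l=c"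
    using i 1 2 by (intro exI[of _ i] exI[of _ "Suc i + j"] exI[of _ "Suc (Suc i + j) + l"]) simp
next
  assume "\<exists>i j l. i<j \<and> j<l \<and> l<length w \<and> w!i=a \<and> w!j=b \<and> w!l=c"
  then obtain i j l where h: "i<j" "j<l" "l<length w" "w!i=a" "w!j=b" "w!l=c" by blast
  have "subseq [c] (drop (Suc j) w)"
    unfolding subseq_singleton_left in_set_conv_nth using h by (intro exI[of _ "l - Suc j"]) auto
  moreover have "Suc (j - Suc i) + Suc i = Suc j" using h by simp
  ultimately have "subseq [b,c] (drop (Suc i) w)" using h
    unfolding subseq_Cons_iff_nth[of b "[c]"] by (intro exI[of _ "j - Suc i"]) auto
  then have "i<length w \<and> w!i = a \<and> subseq [b,c] (drop (Suc i) w)" using h by simp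
  then show "subseq [a,b,c] w"
    unfolding subseq_Cons_iff_nth[of a "[b,c]" w] by (rule exI[of _ i])
qed

lemma less3: "(x::nat) < length [p,q,r] \<Longrightarrow> x = 0 \<or> x = 1 \<or> x = 2" by auto

lemma oi_gen:
  assumes "order_iso u p" "length p = 3"
  shows "\<exists>x y z. u = [x,y,z] \<and> (\<forall>a<3. \<forall>b<3. (u!a < u!b \<longleftrightarrow> p!a < p!b))"
proof -
  have "length u = 3" using assms by (simp add: order_iso_def)
  then obtain x y z where u: "u = [x,y,z]"
    by (auto simp: numeral_3_eq_3 length_Suc_conv)
  then show ?thesis using assms by (auto simp: order_iso_def)
qed

lemma oi010: "order_iso u [0,1,0] \<longleftrightarrow> (\<exists>a b. u = [a,b,a] \<and> a < b)"
proof
  assume h: "order_iso u [0,1,0]"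
  then obtain x y z where u: "u = [x,y,z]" and c: "\<forall>a<3. \<forall>b<3. (u!a < u!b \<longleftrightarrow> [0::nat,1,0]!a < [0,1,0]!b)"
    using oi_gen[OF h] by (auto simp del: One_nat_def)
  have "x<y" using c[rule_format, of 0 1] u by simp
  moreover have "\<not> x<z" using c[rule_format, of 0 2] u by simp
  moreover have "\<not> z<x" using c[rule_format, of 2 0] u by simp
  ultimately show "\<exists>a b. u = [a,b,a] \<and> a < b" using u by auto
next
  assume "\<exists>a b. u = [a,b,a] \<and> a < b"
  then show "order_iso u [0,1,0]"
    unfolding order_iso_def
    apply (elim exE conjE)
    apply (intro conjI allI impI)
     apply simp
    apply (drule less3)+
    by (elim disjE; simp)
qed

lemma oi110: "order_iso u [1,1,0] \<longleftrightarrow> (\<exists>a c. u = [a,a,c] \<and> c < a)"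
proof
  assume h: "order_iso u [1,1,0]"
  then obtain x y z where u: "u = [x,y,z]" and c: "\<forall>a<3. \<forall>b<3. (u!a < u!b \<longleftrightarrow> [1::nat,1,0]!a < [1,1,0]!b)"
    using oi_gen[OF h] by (auto simp del: One_nat_def)
  have "\<not> x<y" using c[rule_format, of 0 1] u by simp
  moreover have "\<not> y<x" using c[rule_format, of 1 0] u by simp
  moreover have "z<x" using c[rule_format, of 2 0] u by simp
  ultimately show "\<exists>a c. u = [a,a,c] \<and> c < a" using u by auto
next
  assume "\<exists>a c. u = [a,a,c] \<and> c < a"
  then show "order_iso u [1,1,0]"
    unfolding order_iso_def
    apply (elim exE conjE)
    apply (intro conjI allI impI)
     apply simp
    apply (drule less3)+
    by (elim disjE; simp)
qed

lemma contains010: "contains w [0,1,0] \<longleftrightarrow> has010 w"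
proof -
  have "contains w [0,1,0] \<longleftrightarrow> (\<exists>a b. a<b \<and> subseq [a,b,a] w)"
    unfolding contains_def oi010 by auto
  also have "\<dots> \<longleftrightarrow> has010 w"
    unfolding subseq3 has010_def
  proof (intro iffI; elim exE conjE)
    fix a b i j l assume "a<b" "i<j" "j<l" "l<length w" "w!i=a" "w!j=b" "w!l=a"
    then show "\<exists>i j l. i<j \<and> j<l \<and> l<length w \<and> w!i = w!l \<and> w!i < w!j"
      by (intro exI[of _ i] exI[of _ j] exI[of _ l]) simp
  next
    fix i j l assume "i<j" "j<l" "l<length w" "w!i = w!l" "w!i < w!j"
    then show "\<exists>a b. a<b \<and> (\<exists>i j l. i<j \<and> j<l \<and> l<length w \<and> w!i=a \<and> w!j=b \<and> w!l=a)"
      by (intro exI[of _ "w!i"] exI[of _ "w!j"] conjI exI[of _ i] exI[of _ j] exI[of _ l]) simp_all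
  qed
  finally show ?thesis .
qed

lemma contains110: "contains w [1,1,0] \<longleftrightarrow> has110 w"
proof -
  have "contains w [1,1,0] \<longleftrightarrow> (\<exists>a c. c<a \<and> subseq [a,a,c] w)"
    unfolding contains_def oi110 by auto
  also have "\<dots> \<longleftrightarrow> has110 w"
    unfolding subseq3 has110_def
  proof (intro iffI; elim exE conjE)
    fix a c i j l assume "c<a" "i<j" "j<l" "l<length w" "w!i=a" "w!j=a" "w!l=c"
    then show "\<exists>i j l. i<j \<and> j<l \<and> l<length w \<and> w!i = w!j \<and> w!l < w!i"
      by (intro exI[of _ i] exI[of _ j] exI[of _ l]) simp
  next
    fix i j l assume "i<j" "j<l" "l<length w" "w!i = w!j" "w!l < w!i"
    then show "\<exists>a c. c<a \<and> (\<exists>i j l. i<j \<and> j<l \<and> l<length w \<and> w!i=a \<and> w!j=a \<and> w!l=c)"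
      by (intro exI[of _ "w!i"] exI[of _ "w!l"] conjI exI[of _ i] exI[of _ j] exI[of _ l]) simp_all
  qed
  finally show ?thesis .
qed

lemma avoids010: "avoids w [0,1,0] \<longleftrightarrow> \<not> has010 w"
  unfolding avoids_def contains010 ..
lemma avoids110: "avoids w [1,1,0] \<longleftrightarrow> \<not> has110 w"
  unfolding avoids_def contains110 ..




lemma nth_app2: "t < length w + 2 \<Longrightarrow>
  (w@[a,b])!t = (if t < length w then w!t else if t = length w then a else b)"
  by (auto simp: nth_append less_Suc_eq numeral_2_eq_2 split: nat.splits)

lemma has010_app2:
  assumes okw: "\<not> has010 w" and lt: "\<forall>x\<in>set w. x < M" and v: "v < M"
  shows "has010 (w@[M,v]) \<longleftrightarrow> v \<in> set w"
proof
  assume "has010 (w@[M,v])"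
  then obtain i j l where h: "i<j" "j<l" "l<length w + 2" "(w@[M,v])!i = (w@[M,v])!l"
    "(w@[M,v])!i < (w@[M,v])!j" unfolding has010_def by auto
  have hi: "(w@[M,v])!i = (if i < length w then w!i else if i = length w then M else v)"
    using h by (intro nth_app2) simp
  have hj: "(w@[M,v])!j = (if j < length w then w!j else if j = length w then M else v)"
    using h by (intro nth_app2) simp
  have hl: "(w@[M,v])!l = (if l < length w then w!l else if l = length w then M else v)"
    using h by (intro nth_app2) simp
  consider "l < length w" | "l = length w" | "l = Suc (length w)" using h by linarith
  then show "v \<in> set w"
  proof cases
    case 1
    have "has010 w" unfolding has010_def
      apply (rule exI[of _ i], rule exI[of _ j], rule exI[of _ l])
      using h hi hj hl 1 by simp
    then show ?thesis using okw by simp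
  next
    case 2
    then have "i < length w" using h by simp
    then have "w!i = M" using h hi hl 2 by simp
    then show ?thesis using lt \<open>i < length w\<close> by (metis less_irrefl nth_mem)
  next
    case 3
    then have "i < length w" using h by simp
    then have "w!i = v" using h hi hl 3 by simp
    then show ?thesis using \<open>i < length w\<close> by (metis nth_mem)
  qed
next
  assume "v \<in> set w"
  then obtain i where i: "i < length w" "w!i = v" by (auto simp: in_set_conv_nth)
  show "has010 (w@[M,v])" unfolding has010_def
    apply (rule exI[of _ i], rule exI[of _ "length w"], rule exI[of _ "Suc (length w)"])
    using i v nth_app2[of "length w" w M v] nth_app2[of "Suc (length w)" w M v] nth_app2[of i w M v]
      nth_app2[of j w M v] by simp
qed

lemma has110_app2:
  assumes okw: "\<not> has110 w" and lt: "\<forall>x\<in>set w. x < M" and v: "v < M"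
  shows "has110 (w@[M,v]) \<longleftrightarrow> v \<in> rep w"
proof
  assume "has110 (w@[M,v])"
  then obtain i j l where h: "i<j" "j<l" "l<length w + 2" "(w@[M,v])!i = (w@[M,v])!j"
    "(w@[M,v])!l < (w@[M,v])!i" unfolding has110_def by auto
  have hi: "(w@[M,v])!i = (if i < length w then w!i else if i = length w then M else v)"
    using h by (intro nth_app2) simp
  have hj: "(w@[M,v])!j = (if j < length w then w!j else if j = length w then M else v)"
    using h by (intro nth_app2) simp
  have hl: "(w@[M,v])!l = (if l < length w then w!l else if l = length w then M else v)"
    using h by (intro nth_app2) simp
  consider "l < length w" | "l = length w" | "l = Suc (length w)" using h by linarith
  then show "v \<in> rep w"
  proof cases
    case 1
    have "has110 w" unfolding has110_def
      apply (rule exI[of _ i], rule exI[of _ j], rule exI[of _ l])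
      using h hi hj hl 1 by simp
    then show ?thesis using okw by simp
  next
    case 2
    then have "i < length w" using h by simp
    then have "w!i < M" using lt by (metis nth_mem)
    then show ?thesis using h hi hl 2 \<open>i < length w\<close> by simp
  next
    case 3
    then have "i < length w" using h by simp
    then have wi: "w!i < M" using lt by (metis nth_mem)
    have "j < length w"
    proof (rule ccontr)
      assume "\<not> j < length w"
      then have "j = length w" using h 3 by simp
      then show False using h hi hj wi \<open>i < length w\<close> by simp
    qed
    show ?thesis unfolding rep_def
      apply (rule CollectI, rule exI[of _ i], rule exI[of _ j])
      using h hi hj hl 3 \<open>i < length w\<close> \<open>j < length w\<close> by simp
  qed
next
  assume "v \<in> rep w"
  then obtain i j where i: "i < j" "j < length w" "w!i = w!j" "v < w!i" by (auto simp: rep_def)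
  show "has110 (w@[M,v])" unfolding has110_def
    apply (rule exI[of _ i], rule exI[of _ j], rule exI[of _ "Suc (length w)"])
    using i v nth_app2[of "length w" w M v] nth_app2[of "Suc (length w)" w M v] nth_app2[of i w M v]
      nth_app2[of j w M v] by simp
qed

lemma rep_le: "v \<in> rep w \<Longrightarrow> \<exists>x\<in>set w. v < x"
  unfolding rep_def by (auto intro: nth_mem)

lemma forb_ok: assumes "ok w" shows "forb w P010_110 = card (Fs w)"
proof (cases "w = []")
  case True then show ?thesis by (simp add: forb_def Fs_def rep_def)
next
  case False
  define M where "M = Suc (Max (set w))"
  have lt: "\<forall>x\<in>set w. x < M" unfolding M_def by (simp add: le_imp_less_Suc)
  have "{v. v \<le> Max (set w) \<and> (\<exists>p\<in>P010_110. contains (w @ [M, v]) p)} = Fs w"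
  proof (intro set_eqI iffI)
    fix v assume "v \<in> {v. v \<le> Max (set w) \<and> (\<exists>p\<in>P010_110. contains (w @ [M, v]) p)}"
    then have v: "v < M" "has010 (w@[M,v]) \<or> has110 (w@[M,v])"
      unfolding M_def P010_110_def using contains010 contains110 by auto
    then show "v \<in> Fs w" using has010_app2[OF _ lt v(1)] has110_app2[OF _ lt v(1)] assms
      unfolding ok_def Fs_def by auto
  next
    fix v assume "v \<in> Fs w"
    then have "v \<le> Max (set w)" unfolding Fs_def using rep_le
      by (metis False List.finite_set Max_ge Un_iff less_imp_le_nat order_trans set_empty)
    then have v: "v < M" unfolding M_def by simp
    have "has010 (w@[M,v]) \<or> has110 (w@[M,v])"
      using has010_app2[OF _ lt v] has110_app2[OF _ lt v] assms \<open>v \<in> Fs w\<close>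
      unfolding ok_def Fs_def by auto
    then show "v \<in> {v. v \<le> Max (set w) \<and> (\<exists>p\<in>P010_110. contains (w @ [M, v]) p)}"
      using \<open>v \<le> Max (set w)\<close> unfolding P010_110_def using contains010 contains110 by auto
  qed
  then show ?thesis using False unfolding forb_def M_def by simp
qed




lemma nth_split: "t < length a + Suc (length b) \<Longrightarrow>
  (a @ m # b)!t = (if t < length a then a!t else if t = length a then m else b!(t - Suc (length a)))"
  by (auto simp: nth_append nth_Cons')

lemma ok_split:
  assumes A: "set a \<subseteq> {..<m}" and B: "set b \<subseteq> {..m}"
  shows "ok (a @ m # b) \<longleftrightarrow> ok a \<and> ok b \<and> set b \<inter> Fs a = {} \<and>
     (\<forall>j l. j < l \<and> l < length b \<and> b!j = m \<longrightarrow> b!l = m)"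
    (is "?L \<longleftrightarrow> ?R")
proof -
  let ?x = "a @ m # b"
  let ?q = "length a"
  have lx: "length ?x = ?q + Suc (length b)" by simp
  have hx: "\<And>t. t < ?q + Suc (length b) \<Longrightarrow> ?x!t = (if t < ?q then a!t else if t = ?q then m else b!(t - Suc ?q))"
    by (rule nth_split)
  have al: "\<And>t. t < ?q \<Longrightarrow> a!t < m" using A nth_mem by blast
  have bl: "\<And>t. t < length b \<Longrightarrow> b!t \<le> m" using B nth_mem by fastforce
  have xa: "\<And>t. t < ?q \<Longrightarrow> ?x!t = a!t" by (simp add: nth_append)
  have xq: "?x!?q = m" by simp
  have xb: "\<And>t. t < length b \<Longrightarrow> ?x!(Suc ?q + t) = b!t" by (simp add: nth_append)
  show ?thesis
  proof
    assume L: ?L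
    have "\<not> has010 a"
    proof
      assume "has010 a"
      then obtain i j l where h: "i<j" "j<l" "l<?q" "a!i = a!l" "a!i < a!j" unfolding has010_def by blast
      have "has010 ?x" unfolding has010_def
        apply (rule exI[of _ i], rule exI[of _ j], rule exI[of _ l])
        using h xa by simp
      then show False using L ok_def by blast
    qed
    moreover have "\<not> has110 a"
    proof
      assume "has110 a"
      then obtain i j l where h: "i<j" "j<l" "l<?q" "a!i = a!j" "a!l < a!i" unfolding has110_def by blast
      have "has110 ?x" unfolding has110_def
        apply (rule exI[of _ i], rule exI[of _ j], rule exI[of _ l])
        using h xa by simp
      then show False using L ok_def by blast
    qed
    moreover have "\<not> has010 b"
    proof
      assume "has010 b"
      then obtain i j l where h: "i<j" "j<l" "l<length b" "b!i = b!l" "b!i < b!j" unfolding has010_def by blast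
      have "has010 ?x" unfolding has010_def
        apply (rule exI[of _ "Suc ?q + i"], rule exI[of _ "Suc ?q + j"], rule exI[of _ "Suc ?q + l"])
        using h xb[of i] xb[of j] xb[of l] by simp
      then show False using L ok_def by blast
    qed
    moreover have "\<not> has110 b"
    proof
      assume "has110 b"
      then obtain i j l where h: "i<j" "j<l" "l<length b" "b!i = b!j" "b!l < b!i" unfolding has110_def by blast
      have "has110 ?x" unfolding has110_def
        apply (rule exI[of _ "Suc ?q + i"], rule exI[of _ "Suc ?q + j"], rule exI[of _ "Suc ?q + l"])
        using h xb[of i] xb[of j] xb[of l] by simp
      then show False using L ok_def by blast
    qed
    moreover have "set b \<inter> Fs a = {}"
    proof (rule ccontr)
      assume "set b \<inter> Fs a \<noteq> {}"
      then obtain v where v: "v \<in> set b" "v \<in> Fs a" by blast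
      then obtain t where t: "t < length b" "b!t = v" by (auto simp: in_set_conv_nth)
      show False
      proof (cases "v \<in> set a")
        case True
        then obtain s where s: "s < ?q" "a!s = v" by (auto simp: in_set_conv_nth)
        have "has010 ?x" unfolding has010_def
          apply (rule exI[of _ s], rule exI[of _ ?q], rule exI[of _ "Suc ?q + t"])
          using s t xa[of s] xq xb[of t] al[of s] by simp
        then show False using L ok_def by blast
      next
        case False
        then have "v \<in> rep a" using v Fs_def by blast
        then obtain i j where ij: "i<j" "j<?q" "a!i = a!j" "v < a!i" unfolding rep_def by blast
        have "has110 ?x" unfolding has110_def
          apply (rule exI[of _ i], rule exI[of _ j], rule exI[of _ "Suc ?q + t"])
          using ij t xa[of i] xa[of j] xb[of t] by simp
        then show False using L ok_def by blast
      qed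
    qed
    moreover have "\<forall>j l. j < l \<and> l < length b \<and> b!j = m \<longrightarrow> b!l = m"
    proof (intro allI impI)
      fix j l assume h: "j < l \<and> l < length b \<and> b!j = m"
      show "b!l = m"
      proof (rule ccontr)
        assume "b!l \<noteq> m"
        then have "b!l < m" using bl[of l] h by simp
        have "has110 ?x" unfolding has110_def
          apply (rule exI[of _ ?q], rule exI[of _ "Suc ?q + j"], rule exI[of _ "Suc ?q + l"])
          using h \<open>b!l < m\<close> xq xb[of j] xb[of l] by simp
        then show False using L ok_def by blast
      qed
    qed
    ultimately show ?R unfolding ok_def by blast
  next
    assume R: ?R
    then have oka: "\<not> has010 a" "\<not> has110 a" and okb: "\<not> has010 b" "\<not> has110 b"
      and disj: "set b \<inter> Fs a = {}"
      and tail: "\<forall>j l. j < l \<and> l < length b \<and> b!j = m \<longrightarrow> b!l = m"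
      unfolding ok_def by auto
    have disj1: "\<And>s t. s < ?q \<Longrightarrow> t < length b \<Longrightarrow> a!s \<noteq> b!t"
    proof
      fix s t assume h: "s < ?q" "t < length b" "a!s = b!t"
      have "b!t \<in> set b" using h(2) by (rule nth_mem)
      moreover have "b!t \<in> Fs a" using nth_mem[OF h(1)] h(3) unfolding Fs_def by simp
      ultimately show False using disj by blast
    qed
    have disj2: "\<And>i j t. i < j \<Longrightarrow> j < ?q \<Longrightarrow> a!i = a!j \<Longrightarrow> t < length b \<Longrightarrow> \<not> b!t < a!i"
    proof
      fix i j t assume h: "i < j" "j < ?q" "a!i = a!j" "t < length b" "b!t < a!i"
      then have "b!t \<in> rep a" unfolding rep_def by blast
      moreover have "b!t \<in> set b" using h(4) by (rule nth_mem)
      ultimately show False using disj unfolding Fs_def by blast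
    qed
    have n010: "\<not> has010 ?x"
    proof
      assume "has010 ?x"
      then obtain i j l where h: "i<j" "j<l" "l<length ?x" "?x!i = ?x!l" "?x!i < ?x!j" unfolding has010_def by blast
      have hi: "?x!i = (if i < ?q then a!i else if i = ?q then m else b!(i - Suc ?q))" using h by (intro hx) simp
      have hj: "?x!j = (if j < ?q then a!j else if j = ?q then m else b!(j - Suc ?q))" using h by (intro hx) simp
      have hl: "?x!l = (if l < ?q then a!l else if l = ?q then m else b!(l - Suc ?q))" using h by (intro hx) simp
      consider "l < ?q" | "l = ?q" | "l > ?q \<and> i < ?q" | "i = ?q" | "i > ?q" by linarith
      then show False
      proof cases
        case 1
        have "has010 a" unfolding has010_def
          apply (rule exI[of _ i], rule exI[of _ j], rule exI[of _ l])
          using 1 h hi hj hl by simp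
        then show False using oka by simp
      next
        case 2
        then show False using h hi hl al[of i] by simp
      next
        case 3
        have "l - Suc ?q < length b" using 3 h by auto
        then show False using 3 h hi hl disj1[of i "l - Suc ?q"] by simp
      next
        case 4
        have "j - Suc ?q < length b" "j > ?q" using 4 h by auto
        then show False using 4 h hi hj bl[of "j - Suc ?q"] by simp
      next
        case 5
        have "has010 b" unfolding has010_def
          apply (rule exI[of _ "i - Suc ?q"], rule exI[of _ "j - Suc ?q"], rule exI[of _ "l - Suc ?q"])
          using 5 h hi hj hl by auto
        then show False using okb by simp
      qed
    qed
    have n110: "\<not> has110 ?x"
    proof
      assume "has110 ?x"
      then obtain i j l where h: "i<j" "j<l" "l<length ?x" "?x!i = ?x!j" "?x!l < ?x!i" unfolding has110_def by blast
      have hi: "?x!i = (if i < ?q then a!i else if i = ?q then m else b!(i - Suc ?q))" using h by (intro hx) simp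
      have hj: "?x!j = (if j < ?q then a!j else if j = ?q then m else b!(j - Suc ?q))" using h by (intro hx) simp
      have hl: "?x!l = (if l < ?q then a!l else if l = ?q then m else b!(l - Suc ?q))" using h by (intro hx) simp
      consider "l < ?q" | "l = ?q" | "l > ?q \<and> j < ?q" | "l > ?q \<and> j = ?q" | "j > ?q \<and> i < ?q"
        | "i = ?q" | "i > ?q" by linarith
      then show False
      proof cases
        case 1
        have "has110 a" unfolding has110_def
          apply (rule exI[of _ i], rule exI[of _ j], rule exI[of _ l])
          using 1 h hi hj hl by simp
        then show False using oka by simp
      next
        case 2
        then show False using h hi hl al[of i] by (cases "i < ?q") auto
      next
        case 3
        have "l - Suc ?q < length b" using 3 h by auto
        then show False using 3 h hi hj hl disj2[of i j "l - Suc ?q"] by simp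
      next
        case 4
        then show False using h hi hj al[of i] by simp
      next
        case 5
        have "j - Suc ?q < length b" using 5 h by auto
        then show False using 5 h hi hj disj1[of i "j - Suc ?q"] by simp
      next
        case 6
        have gt: "j > ?q" "l > ?q" using 6 h by auto
        have bj: "b!(j - Suc ?q) = m" using hi hj h 6 gt by simp
        have bl': "b!(l - Suc ?q) < m" using hi hl h 6 gt by simp
        have "j - Suc ?q < l - Suc ?q" "l - Suc ?q < length b" using h gt lx by auto
        then show False using tail bj bl' by auto
      next
        case 7
        have "has110 b" unfolding has110_def
          apply (rule exI[of _ "i - Suc ?q"], rule exI[of _ "j - Suc ?q"], rule exI[of _ "l - Suc ?q"])
          using 7 h hi hj hl by auto
        then show False using okb by simp
      qed
    qed
    show ?L using n010 n110 unfolding ok_def by simp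
  qed
qed




lemma rep_sub: assumes "set w \<subseteq> {..<c}" shows "rep w \<subseteq> {..<c}"
proof
  fix v assume "v \<in> rep w"
  then obtain i j where h: "i<j" "j<length w" "w!i = w!j" "v < w!i" unfolding rep_def by blast
  have "i < length w" using h by simp
  then have "w!i \<in> set w" by (rule nth_mem)
  then have "w!i \<in> {..<c}" using assms by blast
  then show "v \<in> {..<c}" using h by simp
qed

lemma Fs_sub: "set w \<subseteq> {..<c} \<Longrightarrow> Fs w \<subseteq> {..<c}"
  unfolding Fs_def using rep_sub by blast

lemma finite_Fs: "finite (Fs w)"
proof -
  have "set w \<subseteq> {..<Suc (Max (insert 0 (set w)))}"
    by (auto simp: le_imp_less_Suc)
  then have "Fs w \<subseteq> {..<Suc (Max (insert 0 (set w)))}" by (rule Fs_sub)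
  then show ?thesis by (rule finite_subset) simp
qed

lemma Fs_twice:
  assumes A: "set a \<subseteq> {..<m}" and B: "set b \<subseteq> {..m}" and mb: "m \<in> set b"
  shows "Fs (a @ m # b) = {..m}"
proof
  have "set (a @ m # b) \<subseteq> {..<Suc m}" using A B by auto
  then have "Fs (a @ m # b) \<subseteq> {..<Suc m}" by (rule Fs_sub)
  then show "Fs (a @ m # b) \<subseteq> {..m}" using lessThan_Suc_atMost by simp
next
  obtain t where t: "t < length b" "b!t = m" using mb by (auto simp: in_set_conv_nth)
  show "{..m} \<subseteq> Fs (a @ m # b)"
  proof
    fix v assume "v \<in> {..m}"
    show "v \<in> Fs (a @ m # b)"
    proof (cases "v = m")
      case True then show ?thesis by (simp add: Fs_def)
    next
      case False
      then have "v < m" using \<open>v \<in> {..m}\<close> by simp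
      have "v \<in> rep (a @ m # b)" unfolding rep_def
        apply (rule CollectI, rule exI[of _ "length a"], rule exI[of _ "Suc (length a) + t"])
        using t \<open>v < m\<close> by (simp add: nth_append)
      then show ?thesis by (simp add: Fs_def)
    qed
  qed
qed

lemma Fs_prefix: "Fs a \<subseteq> Fs (a @ m # b)"
proof
  fix v assume "v \<in> Fs a"
  show "v \<in> Fs (a @ m # b)"
  proof (cases "v \<in> set a")
    case True then show ?thesis by (simp add: Fs_def)
  next
    case False
    then have "v \<in> rep a" using \<open>v \<in> Fs a\<close> by (simp add: Fs_def)
    then obtain i j where ij: "i<j" "j<length a" "a!i = a!j" "v < a!i" unfolding rep_def by blast
    have "v \<in> rep (a @ m # b)" unfolding rep_def
      apply (rule CollectI, rule exI[of _ i], rule exI[of _ j])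
      using ij by (simp add: nth_append)
    then show ?thesis by (simp add: Fs_def)
  qed
qed

lemma Fs_once:
  assumes A: "set a \<subseteq> {..<m}" and B: "set b \<subseteq> {..m}" and mb: "m \<notin> set b"
    and ok: "ok (a @ m # b)"
  shows "Fs (a @ m # b) = Fs a \<union> {m} \<union> Fs b"
proof -
  let ?x = "a @ m # b"
  let ?q = "length a"
  have disj: "set b \<inter> Fs a = {}" using ok_split[OF A B] ok by blast
  have hx: "\<And>t. t < ?q + Suc (length b) \<Longrightarrow> ?x!t = (if t < ?q then a!t else if t = ?q then m else b!(t - Suc ?q))"
    by (rule nth_split)
  have "rep ?x \<subseteq> rep a \<union> rep b"
  proof
    fix v assume "v \<in> rep ?x"
    then obtain i j where h: "i<j" "j<length ?x" "?x!i = ?x!j" "v < ?x!i" unfolding rep_def by blast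
    have hi: "?x!i = (if i < ?q then a!i else if i = ?q then m else b!(i - Suc ?q))" using h by (intro hx) simp
    have hj: "?x!j = (if j < ?q then a!j else if j = ?q then m else b!(j - Suc ?q))" using h by (intro hx) simp
    consider "j < ?q" | "j = ?q" | "j > ?q \<and> i < ?q" | "i = ?q" | "i > ?q" by linarith
    then show "v \<in> rep a \<union> rep b"
    proof cases
      case 1
      have "v \<in> rep a" unfolding rep_def
        apply (rule CollectI, rule exI[of _ i], rule exI[of _ j])
        using 1 h hi hj by simp
      then show ?thesis by simp
    next
      case 2
      then have "a!i = m" "i < ?q" using h hi hj by auto
      then show ?thesis using A nth_mem by fastforce
    next
      case 3
      then have jb: "j - Suc ?q < length b" using h by auto
      have "a!i = b!(j - Suc ?q)" using 3 hi hj h by simp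
      then have "b!(j - Suc ?q) \<in> set b \<inter> Fs a" using nth_mem[OF jb] nth_mem[of i a] 3
        by (simp add: Fs_def)
      then show ?thesis using disj by blast
    next
      case 4
      then have jb: "j - Suc ?q < length b" "j > ?q" using h by auto
      then have "b!(j - Suc ?q) = m" using 4 hi hj h by simp
      then show ?thesis using mb nth_mem[OF jb(1)] by simp
    next
      case 5
      have "v \<in> rep b" unfolding rep_def
        apply (rule CollectI, rule exI[of _ "i - Suc ?q"], rule exI[of _ "j - Suc ?q"])
        using 5 h hi hj by auto
      then show ?thesis by simp
    qed
  qed
  moreover have "rep a \<subseteq> rep ?x"
  proof
    fix v assume "v \<in> rep a"
    then obtain i j where ij: "i<j" "j<length a" "a!i = a!j" "v < a!i" unfolding rep_def by blast
    show "v \<in> rep ?x" unfolding rep_def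
      apply (rule CollectI, rule exI[of _ i], rule exI[of _ j])
      using ij by (simp add: nth_append)
  qed
  moreover have "rep b \<subseteq> rep ?x"
  proof
    fix v assume "v \<in> rep b"
    then obtain i j where ij: "i<j" "j<length b" "b!i = b!j" "v < b!i" unfolding rep_def by blast
    show "v \<in> rep ?x" unfolding rep_def
      apply (rule CollectI, rule exI[of _ "Suc ?q + i"], rule exI[of _ "Suc ?q + j"])
      using ij by (simp add: nth_append)
  qed
  ultimately have "rep ?x = rep a \<union> rep b" by blast
  then show ?thesis unfolding Fs_def by auto
qed

lemma tail_form:
  assumes "\<forall>j l. j < l \<and> l < length b \<and> b!j = m \<longrightarrow> b!l = m"
  shows "b = takeWhile (\<lambda>x. x \<noteq> m) b @ replicate (length b - length (takeWhile (\<lambda>x. x \<noteq> m) b)) m"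
  using assms
proof (induction b)
  case Nil then show ?case by simp
next
  case (Cons x b)
  show ?case
  proof (cases "x = m")
    case True
    have "\<forall>y\<in>set b. y = m"
    proof
      fix y assume "y \<in> set b"
      then obtain t where "t < length b" "b!t = y" by (auto simp: in_set_conv_nth)
      then show "y = m" using Cons.prems[rule_format, of 0 "Suc t"] True by simp
    qed
    then have r: "replicate (length b) m = b" by (rule replicate_length_same)
    have "takeWhile (\<lambda>x. x \<noteq> m) (x#b) = []" using True by simp
    then show ?thesis using True r by simp
  next
    case False
    have "\<forall>j l. j < l \<and> l < length b \<and> b!j = m \<longrightarrow> b!l = m"
    proof (intro allI impI)
      fix j l assume "j < l \<and> l < length b \<and> b!j = m"
      then show "b!l = m" using Cons.prems[rule_format, of "Suc j" "Suc l"] by simp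
    qed
    then show ?thesis using Cons.IH False by simp
  qed
qed

lemma has010_prefix: "has010 g \<Longrightarrow> has010 (g @ h)"
proof -
  assume "has010 g"
  then obtain i j l where h: "i<j" "j<l" "l<length g" "g!i = g!l" "g!i < g!j" unfolding has010_def by blast
  show ?thesis unfolding has010_def
    apply (rule exI[of _ i], rule exI[of _ j], rule exI[of _ l])
    using h by (simp add: nth_append)
qed

lemma has110_prefix: "has110 g \<Longrightarrow> has110 (g @ h)"
proof -
  assume "has110 g"
  then obtain i j l where h: "i<j" "j<l" "l<length g" "g!i = g!j" "g!l < g!i" unfolding has110_def by blast
  show ?thesis unfolding has110_def
    apply (rule exI[of _ i], rule exI[of _ j], rule exI[of _ l])
    using h by (simp add: nth_append)
qed

lemma ok_prefix: "ok (g @ h) \<Longrightarrow> ok g"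
  unfolding ok_def using has010_prefix has110_prefix by blast

lemma ok_rep:
  assumes okg: "ok g" and lt: "\<forall>x\<in>set g. x < m"
  shows "ok (g @ replicate t m)"
proof -
  let ?x = "g @ replicate t m"
  have hx: "\<And>s. s < length ?x \<Longrightarrow> ?x!s = (if s < length g then g!s else m)"
    by (auto simp: nth_append)
  have gl: "\<And>s. s < length g \<Longrightarrow> g!s < m" using lt nth_mem by blast
  have "\<not> has010 ?x"
  proof
    assume "has010 ?x"
    then obtain i j l where h: "i<j" "j<l" "l<length ?x" "?x!i = ?x!l" "?x!i < ?x!j" unfolding has010_def by blast
    show False
    proof (cases "l < length g")
      case True
      have "has010 g" unfolding has010_def
        apply (rule exI[of _ i], rule exI[of _ j], rule exI[of _ l])
        using True h hx[of i] hx[of j] hx[of l] by simp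
      then show False using okg ok_def by blast
    next
      case False
      then have "?x!l = m" using hx[of l] h by simp
      moreover have "?x!j \<le> m" using hx[of j] h gl[of j] by (cases "j < length g") auto
      ultimately show False using h by simp
    qed
  qed
  moreover have "\<not> has110 ?x"
  proof
    assume "has110 ?x"
    then obtain i j l where h: "i<j" "j<l" "l<length ?x" "?x!i = ?x!j" "?x!l < ?x!i" unfolding has110_def by blast
    show False
    proof (cases "l < length g")
      case True
      have "has110 g" unfolding has110_def
        apply (rule exI[of _ i], rule exI[of _ j], rule exI[of _ l])
        using True h hx[of i] hx[of j] hx[of l] by simp
      then show False using okg ok_def by blast
    next
      case False
      then have "?x!l = m" using hx[of l] h by simp
      moreover have "?x!i \<le> m" using hx[of i] h gl[of i] by (cases "i < length g") auto
      ultimately show False using h by simp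
    qed
  qed
  ultimately show ?thesis unfolding ok_def by simp
qed

lemma tail_rep:
  assumes "m \<notin> set g"
  shows "\<forall>j l. j < l \<and> l < length (g @ replicate t m) \<and> (g @ replicate t m)!j = m \<longrightarrow> (g @ replicate t m)!l = m"
proof (intro allI impI)
  fix j l assume h: "j < l \<and> l < length (g @ replicate t m) \<and> (g @ replicate t m)!j = m"
  have "\<not> j < length g"
  proof
    assume "j < length g"
    then have "g!j = m" using h by (simp add: nth_append)
    then show False using assms nth_mem \<open>j < length g\<close> by metis
  qed
  then show "(g @ replicate t m)!l = m" using h by (auto simp: nth_append)
qed




definition WA :: "nat \<Rightarrow> nat set \<Rightarrow> nat list set" where
  "WA L A = {g. length g = L \<and> set g \<subseteq> A \<and> ok g}"
definition WAg :: "nat \<Rightarrow> nat set \<Rightarrow> nat \<Rightarrow> nat list set" where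
  "WAg L A e = {g. length g = L \<and> set g \<subseteq> A \<and> ok g \<and> card (Fs g \<inter> A) = e}"

lemma jj_alt: "jj n k f = card (WAg n {..<k} f)"
proof -
  have "{w. length w = n \<and> set w \<subseteq> {..<k} \<and> avoids w [0,1,0] \<and> avoids w [1,1,0] \<and> forb w P010_110 = f}
      = WAg n {..<k} f"
  proof (intro set_eqI iffI)
    fix w assume "w \<in> {w. length w = n \<and> set w \<subseteq> {..<k} \<and> avoids w [0,1,0] \<and> avoids w [1,1,0] \<and> forb w P010_110 = f}"
    then have h: "length w = n" "set w \<subseteq> {..<k}" "ok w" "forb w P010_110 = f"
      unfolding ok_def avoids010 avoids110 by auto
    have "Fs w \<inter> {..<k} = Fs w" using Fs_sub[OF h(2)] by blast
    then show "w \<in> WAg n {..<k} f" using h forb_ok[OF h(3)] unfolding WAg_def by simp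
  next
    fix w assume "w \<in> WAg n {..<k} f"
    then have h: "length w = n" "set w \<subseteq> {..<k}" "ok w" "card (Fs w \<inter> {..<k}) = f"
      unfolding WAg_def by auto
    have "Fs w \<inter> {..<k} = Fs w" using Fs_sub[OF h(2)] by blast
    then show "w \<in> {w. length w = n \<and> set w \<subseteq> {..<k} \<and> avoids w [0,1,0] \<and> avoids w [1,1,0] \<and> forb w P010_110 = f}"
      using h forb_ok[OF h(3)] unfolding ok_def avoids010 avoids110 by simp
  qed
  then show ?thesis unfolding jj_def by simp
qed

lemma kk_alt: "kk n k = card (WA n {..<k})"
  unfolding kk_def WA_def ok_def avoids010 avoids110 by simp

lemma has010_map:
  assumes "\<forall>x\<in>set w. \<forall>y\<in>set w. (f x < f y \<longleftrightarrow> x < y)"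
  shows "has010 (map f w) \<longleftrightarrow> has010 w"
proof -
  have lt: "\<And>i j. i < length w \<Longrightarrow> j < length w \<Longrightarrow> (f (w!i) < f (w!j) \<longleftrightarrow> w!i < w!j)"
    using assms nth_mem by blast
  have eq: "\<And>i j. i < length w \<Longrightarrow> j < length w \<Longrightarrow> (f (w!i) = f (w!j) \<longleftrightarrow> w!i = w!j)"
    using lt by (metis linorder_neq_iff)
  show ?thesis unfolding has010_def
  proof (intro iffI; elim exE conjE)
    fix i j l assume h: "i<j" "j<l" "l<length (map f w)" "map f w ! i = map f w ! l" "map f w ! i < map f w ! j"
    show "\<exists>i j l. i < j \<and> j < l \<and> l < length w \<and> w ! i = w ! l \<and> w ! i < w ! j"
      apply (rule exI[of _ i], rule exI[of _ j], rule exI[of _ l])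
      using h eq[of i l] lt[of i j] by simp
  next
    fix i j l assume h: "i<j" "j<l" "l<length w" "w ! i = w ! l" "w ! i < w ! j"
    show "\<exists>i j l. i < j \<and> j < l \<and> l < length (map f w) \<and> map f w ! i = map f w ! l \<and> map f w ! i < map f w ! j"
      apply (rule exI[of _ i], rule exI[of _ j], rule exI[of _ l])
      using h eq[of i l] lt[of i j] by simp
  qed
qed

lemma has110_map:
  assumes "\<forall>x\<in>set w. \<forall>y\<in>set w. (f x < f y \<longleftrightarrow> x < y)"
  shows "has110 (map f w) \<longleftrightarrow> has110 w"
proof -
  have lt: "\<And>i j. i < length w \<Longrightarrow> j < length w \<Longrightarrow> (f (w!i) < f (w!j) \<longleftrightarrow> w!i < w!j)"
    using assms nth_mem by blast
  have eq: "\<And>i j. i < length w \<Longrightarrow> j < length w \<Longrightarrow> (f (w!i) = f (w!j) \<longleftrightarrow> w!i = w!j)"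
    using lt by (metis linorder_neq_iff)
  show ?thesis unfolding has110_def
  proof (intro iffI; elim exE conjE)
    fix i j l assume h: "i<j" "j<l" "l<length (map f w)" "map f w ! i = map f w ! j" "map f w ! l < map f w ! i"
    show "\<exists>i j l. i < j \<and> j < l \<and> l < length w \<and> w ! i = w ! j \<and> w ! l < w ! i"
      apply (rule exI[of _ i], rule exI[of _ j], rule exI[of _ l])
      using h eq[of i j] lt[of l i] by simp
  next
    fix i j l assume h: "i<j" "j<l" "l<length w" "w ! i = w ! j" "w ! l < w ! i"
    show "\<exists>i j l. i < j \<and> j < l \<and> l < length (map f w) \<and> map f w ! i = map f w ! j \<and> map f w ! l < map f w ! i"
      apply (rule exI[of _ i], rule exI[of _ j], rule exI[of _ l])
      using h eq[of i j] lt[of l i] by simp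
  qed
qed

lemma ok_map:
  assumes "\<forall>x\<in>set w. \<forall>y\<in>set w. (f x < f y \<longleftrightarrow> x < y)"
  shows "ok (map f w) \<longleftrightarrow> ok w"
  unfolding ok_def using has010_map[OF assms] has110_map[OF assms] by simp

context
  fixes A :: "nat set"
  assumes finA: "finite A"
begin

definition "rr u = sorted_list_of_set A ! u"

lemma rr_lt: "x < card A \<Longrightarrow> y < card A \<Longrightarrow> (rr x < rr y \<longleftrightarrow> x < y)"
proof -
  assume xy: "x < card A" "y < card A"
  have s: "sorted_wrt (<) (sorted_list_of_set A)" by (rule strict_sorted_list_of_set)
  have len: "length (sorted_list_of_set A) = card A" by simp
  show ?thesis
  proof
    assume "rr x < rr y"
    show "x < y"
    proof (rule ccontr)
      assume "\<not> x < y"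
      then have "y < x \<or> y = x" by auto
      then show False
      proof
        assume "y < x"
        then have "rr y < rr x" unfolding rr_def using sorted_wrt_nth_less[OF s] xy len by simp
        then show False using \<open>rr x < rr y\<close> by simp
      next
        assume "y = x" then show False using \<open>rr x < rr y\<close> by simp
      qed
    qed
  next
    assume "x < y"
    then show "rr x < rr y" unfolding rr_def using sorted_wrt_nth_less[OF s] xy len by simp
  qed
qed

lemma rr_inj: "inj_on rr {..<card A}"
proof (rule inj_onI)
  fix x y assume h: "x \<in> {..<card A}" "y \<in> {..<card A}" "rr x = rr y"
  then have "\<not> x < y" "\<not> y < x" using rr_lt[of x y] rr_lt[of y x] by auto
  then show "x = y" by simp
qed

lemma rr_cond: "set h \<subseteq> {..<card A} \<Longrightarrow> \<forall>x\<in>set h. \<forall>y\<in>set h. (rr x < rr y \<longleftrightarrow> x < y)"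
proof (intro ballI)
  fix x y assume "set h \<subseteq> {..<card A}" "x \<in> set h" "y \<in> set h"
  then have "x < card A" "y < card A" by auto
  then show "(rr x < rr y \<longleftrightarrow> x < y)" by (rule rr_lt)
qed

lemma rr_image: "rr ` {..<card A} = A"
proof -
  have "rr ` {..<card A} = set (sorted_list_of_set A)"
    unfolding rr_def by (auto simp: set_conv_nth)
  then show ?thesis using finA by simp
qed

lemma Fs_map_rr:
  assumes "set g \<subseteq> {..<card A}"
  shows "Fs (map rr g) \<inter> A = rr ` Fs g"
proof
  have lt: "\<And>i. i < length g \<Longrightarrow> g!i < card A" using assms nth_mem by blast
  show "Fs (map rr g) \<inter> A \<subseteq> rr ` Fs g"
  proof
    fix v assume v: "v \<in> Fs (map rr g) \<inter> A"
    then obtain u where u: "u < card A" "v = rr u" using rr_image by auto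
    show "v \<in> rr ` Fs g"
    proof (cases "v \<in> set (map rr g)")
      case True
      then show ?thesis unfolding Fs_def by auto
    next
      case False
      then have "v \<in> rep (map rr g)" using v unfolding Fs_def by auto
      then obtain i j where h: "i<j" "j<length g" "rr (g!i) = rr (g!j)" "v < rr (g!i)"
        unfolding rep_def by auto
      have "u < g!i" using rr_lt[of u "g!i"] u h lt[of i] by simp
      moreover have "g!i = g!j" using h lt[of i] lt[of j] rr_inj unfolding inj_on_def by simp
      ultimately have "u \<in> rep g" unfolding rep_def using h by blast
      then show ?thesis using u unfolding Fs_def by blast
    qed
  qed
next
  have lt: "\<And>i. i < length g \<Longrightarrow> g!i < card A" using assms nth_mem by blast
  show "rr ` Fs g \<subseteq> Fs (map rr g) \<inter> A"
  proof
    fix v assume "v \<in> rr ` Fs g"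
    then obtain u where u: "u \<in> Fs g" "v = rr u" by blast
    have uc: "u < card A" using Fs_sub[OF assms] u by blast
    then have "v \<in> A" using u rr_image by blast
    moreover have "v \<in> Fs (map rr g)"
    proof (cases "u \<in> set g")
      case True then show ?thesis using u unfolding Fs_def by simp
    next
      case False
      then have "u \<in> rep g" using u unfolding Fs_def by simp
      then obtain i j where h: "i<j" "j<length g" "g!i = g!j" "u < g!i"
        unfolding rep_def by blast
      have "rr u < rr (g!i)" using rr_lt[of u "g!i"] uc h lt[of i] by simp
      then have "v \<in> rep (map rr g)" unfolding rep_def
        apply (intro CollectI)
        apply (rule exI[of _ i], rule exI[of _ j])
        using h u by simp
      then show ?thesis unfolding Fs_def by simp
    qed
    ultimately show "v \<in> Fs (map rr g) \<inter> A" by simp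
  qed
qed

lemma map_rr_image:
  "map rr ` {g. length g = L \<and> set g \<subseteq> {..<card A}} = {g. length g = L \<and> set g \<subseteq> A}"
proof (intro set_eqI iffI)
  fix g assume "g \<in> map rr ` {g. length g = L \<and> set g \<subseteq> {..<card A}}"
  then obtain h where h: "g = map rr h" "length h = L" "set h \<subseteq> {..<card A}" by blast
  have "set g = rr ` set h" using h by simp
  also have "\<dots> \<subseteq> rr ` {..<card A}" using h(3) by (rule image_mono)
  finally show "g \<in> {g. length g = L \<and> set g \<subseteq> A}" using h rr_image by simp
next
  fix g assume g: "g \<in> {g. length g = L \<and> set g \<subseteq> A}"
  let ?h = "map (inv_into {..<card A} rr) g"
  have "map rr ?h = map (\<lambda>a. rr (inv_into {..<card A} rr a)) g" by simp
  also have "\<dots> = g"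
  proof (rule map_idI)
    fix a assume "a \<in> set g"
    then have "a \<in> rr ` {..<card A}" using g rr_image by auto
    then show "rr (inv_into {..<card A} rr a) = a" by (rule f_inv_into_f)
  qed
  finally have "map rr ?h = g" .
  moreover have "set ?h \<subseteq> {..<card A}"
  proof
    fix x assume "x \<in> set ?h"
    then obtain a where a: "a \<in> set g" "x = inv_into {..<card A} rr a" by auto
    then have "a \<in> rr ` {..<card A}" using g rr_image by auto
    then show "x \<in> {..<card A}" unfolding a(2) by (rule inv_into_into)
  qed
  ultimately show "g \<in> map rr ` {g. length g = L \<and> set g \<subseteq> {..<card A}}"
  proof (intro image_eqI[of _ _ ?h])
    show "g = map rr ?h" using \<open>map rr ?h = g\<close> by simp
    show "?h \<in> {g. length g = L \<and> set g \<subseteq> {..<card A}}" using g \<open>set ?h \<subseteq> {..<card A}\<close> by simp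
  qed
qed

lemma card_WA: "card (WA L A) = kk L (card A)"
proof -
  have "WA L A = map rr ` WA L {..<card A}"
  proof (intro set_eqI iffI)
    fix g assume g: "g \<in> WA L A"
    then have "g \<in> map rr ` {g. length g = L \<and> set g \<subseteq> {..<card A}}"
      unfolding map_rr_image WA_def by simp
    then obtain h where h: "g = map rr h" "length h = L" "set h \<subseteq> {..<card A}" by blast
    have "ok h" using g h ok_map[OF rr_cond[OF h(3)]] unfolding WA_def by simp
    then show "g \<in> map rr ` WA L {..<card A}" using h unfolding WA_def by blast
  next
    fix g assume "g \<in> map rr ` WA L {..<card A}"
    then obtain h where h: "g = map rr h" "length h = L" "set h \<subseteq> {..<card A}" "ok h"
      unfolding WA_def by blast
    have "ok g" using h ok_map[OF rr_cond[OF h(3)]] by simp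
    moreover have "g \<in> map rr ` {g. length g = L \<and> set g \<subseteq> {..<card A}}" using h by blast
    ultimately show "g \<in> WA L A" unfolding map_rr_image WA_def by simp
  qed
  moreover have "inj_on (map rr) (WA L {..<card A})"
  proof (rule inj_onI)
    fix x y assume h: "x \<in> WA L {..<card A}" "y \<in> WA L {..<card A}" "map rr x = map rr y"
    have "inj_on rr (set x \<union> set y)" using h(1,2) unfolding WA_def
      by (intro inj_on_subset[OF rr_inj]) auto
    then show "x = y" by (intro map_inj_on[OF h(3)])
  qed
  ultimately have "card (WA L A) = card (WA L {..<card A})" by (simp add: card_image)
  then show ?thesis using kk_alt by simp
qed

lemma card_WAg: "card (WAg L A e) = jj L (card A) e"
proof -
  have "WAg L A e = map rr ` WAg L {..<card A} e"
  proof (intro set_eqI iffI)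
    fix g assume g: "g \<in> WAg L A e"
    then have "g \<in> map rr ` {g. length g = L \<and> set g \<subseteq> {..<card A}}"
      unfolding map_rr_image WAg_def by simp
    then obtain h where h: "g = map rr h" "length h = L" "set h \<subseteq> {..<card A}" by blast
    have "ok h" using g h ok_map[OF rr_cond[OF h(3)]] unfolding WAg_def by simp
    have "card (Fs h \<inter> {..<card A}) = card (Fs h)" using Fs_sub[OF h(3)] by (simp add: Int_absorb2)
    also have "\<dots> = card (rr ` Fs h)"
      using inj_on_subset[OF rr_inj Fs_sub[OF h(3)]] by (simp add: card_image)
    also have "\<dots> = e" using g h Fs_map_rr[OF h(3)] unfolding WAg_def by simp
    finally show "g \<in> map rr ` WAg L {..<card A} e" using h \<open>ok h\<close> unfolding WAg_def by blast
  next
    fix g assume "g \<in> map rr ` WAg L {..<card A} e"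
    then obtain h where h: "g = map rr h" "length h = L" "set h \<subseteq> {..<card A}" "ok h"
       "card (Fs h \<inter> {..<card A}) = e"
      unfolding WAg_def by blast
    have "ok g" using h ok_map[OF rr_cond[OF h(3)]] by simp
    moreover have "g \<in> map rr ` {g. length g = L \<and> set g \<subseteq> {..<card A}}" using h by blast
    moreover have "card (Fs g \<inter> A) = e"
    proof -
      have "card (Fs g \<inter> A) = card (rr ` Fs h)" using h Fs_map_rr[OF h(3)] by simp
      also have "\<dots> = card (Fs h)"
        using inj_on_subset[OF rr_inj Fs_sub[OF h(3)]] by (simp add: card_image)
      also have "\<dots> = e" using h(5) Fs_sub[OF h(3)] by (simp add: Int_absorb2)
      finally show ?thesis .
    qed
    ultimately show "g \<in> WAg L A e" unfolding map_rr_image WAg_def by simp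
  qed
  moreover have "inj_on (map rr) (WAg L {..<card A} e)"
  proof (rule inj_onI)
    fix x y assume h: "x \<in> WAg L {..<card A} e" "y \<in> WAg L {..<card A} e" "map rr x = map rr y"
    have "inj_on rr (set x \<union> set y)" using h(1,2) unfolding WAg_def
      by (intro inj_on_subset[OF rr_inj]) auto
    then show "x = y" by (intro map_inj_on[OF h(3)])
  qed
  ultimately have "card (WAg L A e) = card (WAg L {..<card A} e)" by (simp add: card_image)
  then show ?thesis using jj_alt by simp
qed

end




lemma finite_words: "finite {w::nat list. length w = L \<and> set w \<subseteq> {..<c}}"
proof -
  have "{w::nat list. length w = L \<and> set w \<subseteq> {..<c}} = {xs. set xs \<subseteq> {..<c} \<and> length xs = L}" by auto
  then show ?thesis using finite_lists_length_eq[of "{..<c}" L] by simp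
qed

lemma card_three:
  fixes X Y :: "nat set"
  assumes X: "X \<subseteq> {..<m}" and Y: "Y \<subseteq> {..<m}"
  shows "card (X \<union> {m} \<union> Y) = card X + 1 + card (Y \<inter> ({..<m} - X))"
proof -
  have fX: "finite X" using finite_subset[OF X] by simp
  have fY: "finite (Y \<inter> ({..<m} - X))" by simp
  have mX: "m \<notin> X" using X by auto
  have e: "X \<union> {m} \<union> Y = X \<union> ({m} \<union> (Y \<inter> ({..<m} - X)))" using Y by auto
  have d1: "X \<inter> ({m} \<union> (Y \<inter> ({..<m} - X))) = {}" using mX by auto
  have "card (X \<union> ({m} \<union> (Y \<inter> ({..<m} - X)))) = card X + card ({m} \<union> (Y \<inter> ({..<m} - X)))"
    using fX fY d1 by (simp add: card_Un_disjoint)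
  also have "card ({m} \<union> (Y \<inter> ({..<m} - X))) = 1 + card (Y \<inter> ({..<m} - X))"
    using fY by (simp add: card_Un_disjoint)
  finally show ?thesis using e by simp
qed

definition Bset :: "nat \<Rightarrow> nat \<Rightarrow> nat \<Rightarrow> nat list \<Rightarrow> nat list set" where
  "Bset L m f a = {b. length b = L \<and> set b \<subseteq> {..m} \<and> ok (a @ m # b) \<and> card (Fs (a @ m # b)) = f}"

lemma finite_Bset: "finite (Bset L m f a)"
  by (rule finite_subset[OF _ finite_words[of L "Suc m"]]) (auto simp: Bset_def)

lemma takeWhile_rep:
  assumes "m \<notin> set g" "t \<ge> 1"
  shows "takeWhile (\<lambda>x. x \<noteq> m) (g @ replicate t m) = g"
proof -
  have "\<And>x. x \<in> set g \<Longrightarrow> x \<noteq> m" using assms by blast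
  then have "takeWhile (\<lambda>x. x \<noteq> m) (g @ replicate t m) = g @ takeWhile (\<lambda>x. x \<noteq> m) (replicate t m)"
    by (rule takeWhile_append2)
  moreover have "takeWhile (\<lambda>x. x \<noteq> m) (replicate t m) = []" using assms(2)
    by (cases t) auto
  ultimately show ?thesis by simp
qed

lemma card_Bset:
  assumes a: "a \<in> WA p1 {..<m}"
  shows "card (Bset L m f a) = (if card (Fs a) < f then
     jj L (m - card (Fs a)) (f - card (Fs a) - 1) +
       (if f = m + 1 then 1 else 0) * (\<Sum>l<L. kk l (m - card (Fs a))) else 0)"
proof -
  let ?i = "card (Fs a)"
  let ?A = "{..<m} - Fs a"
  have A: "set a \<subseteq> {..<m}" and oka: "ok a" using a unfolding WA_def by auto
  have FsA: "Fs a \<subseteq> {..<m}" using Fs_sub[OF A] .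
  have finFa: "finite (Fs a)" by (rule finite_Fs)
  have mFa: "m \<notin> Fs a" using FsA by auto
  have cardA: "card ?A = m - ?i" using FsA finFa by (simp add: card_Diff_subset)
  have finA: "finite ?A" by simp
  show ?thesis
  proof (cases "?i < f")
    case False
    have "Bset L m f a = {}"
    proof (rule ccontr)
      assume "Bset L m f a \<noteq> {}"
      then obtain b where b: "b \<in> Bset L m f a" by blast
      let ?w = "a @ m # b"
      have "Fs a \<union> {m} \<subseteq> Fs ?w" using Fs_prefix[of a m b] by (auto simp: Fs_def)
      then have "card (Fs a \<union> {m}) \<le> card (Fs ?w)" using finite_Fs by (rule card_mono[rotated])
      moreover have "card (Fs a \<union> {m}) = ?i + 1" using mFa finFa by simp
      ultimately show False using b False unfolding Bset_def by simp
    qed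
    then show ?thesis using False by simp
  next
    case True
    let ?B1 = "{b \<in> Bset L m f a. m \<notin> set b}"
    let ?B2 = "{b \<in> Bset L m f a. m \<in> set b}"
    have split: "Bset L m f a = ?B1 \<union> ?B2" by blast
    have cardsplit: "card (Bset L m f a) = card ?B1 + card ?B2"
      by (subst split, rule card_Un_disjoint) (use finite_Bset in auto)
    have B1: "?B1 = WAg L ?A (f - ?i - 1)"
    proof (intro set_eqI iffI)
      fix b assume "b \<in> ?B1"
      then have b: "length b = L" "set b \<subseteq> {..m}" "ok (a @ m # b)" "card (Fs (a @ m # b)) = f"
        "m \<notin> set b" unfolding Bset_def by auto
      have sp: "ok b" "set b \<inter> Fs a = {}" using ok_split[OF A b(2)] b(3) by auto
      have bl: "set b \<subseteq> {..<m}" using b(2) b(5) by (auto simp: le_less)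
      have sb: "set b \<subseteq> ?A" using bl sp(2) by blast
      have "Fs (a @ m # b) = Fs a \<union> {m} \<union> Fs b" using Fs_once[OF A b(2) b(5) b(3)] .
      then have "f = ?i + 1 + card (Fs b \<inter> ?A)" using card_three[OF FsA Fs_sub[OF bl]] b(4) by simp
      then have "card (Fs b \<inter> ?A) = f - ?i - 1" by simp
      then show "b \<in> WAg L ?A (f - ?i - 1)" using b sp sb unfolding WAg_def by simp
    next
      fix b assume "b \<in> WAg L ?A (f - ?i - 1)"
      then have b: "length b = L" "set b \<subseteq> ?A" "ok b" "card (Fs b \<inter> ?A) = f - ?i - 1"
        unfolding WAg_def by auto
      have bl: "set b \<subseteq> {..<m}" using b(2) by blast
      have bm: "set b \<subseteq> {..m}" using bl by auto
      have mb: "m \<notin> set b" using bl by auto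
      have tl: "\<forall>j l. j < l \<and> l < length b \<and> b!j = m \<longrightarrow> b!l = m"
      proof (intro allI impI)
        fix j l assume h: "j < l \<and> l < length b \<and> b!j = m"
        then have "j < length b" by simp
        then have "b!j \<in> set b" by (rule nth_mem)
        then show "b!l = m" using mb h by simp
      qed
      have dj: "set b \<inter> Fs a = {}" using b(2) by blast
      have okw: "ok (a @ m # b)" using ok_split[OF A bm] oka b(3) dj tl by simp
      have "Fs (a @ m # b) = Fs a \<union> {m} \<union> Fs b" using Fs_once[OF A bm mb okw] .
      then have "card (Fs (a @ m # b)) = ?i + 1 + (f - ?i - 1)"
        using card_three[OF FsA Fs_sub[OF bl]] b(4) by simp
      then have "card (Fs (a @ m # b)) = f" using True by simp
      then show "b \<in> ?B1" using b bm okw mb unfolding Bset_def by simp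
    qed
    have cB1: "card ?B1 = jj L (m - ?i) (f - ?i - 1)"
      using B1 card_WAg[OF finA] cardA by simp
    have cB2: "card ?B2 = (if f = m + 1 then 1 else 0) * (\<Sum>l<L. kk l (m - ?i))"
    proof (cases "f = m + 1")
      case False
      have "?B2 = {}"
      proof (rule ccontr)
        assume "?B2 \<noteq> {}"
        then obtain b where b: "b \<in> Bset L m f a" "m \<in> set b" by blast
        then have "Fs (a @ m # b) = {..m}" using Fs_twice[OF A] unfolding Bset_def by auto
        then show False using b False unfolding Bset_def by simp
      qed
      then have "card ?B2 = 0" by (simp only: card.empty)
      then show ?thesis using False by simp
    next
      case f: True
      let ?h = "\<lambda>(l, g). g @ replicate (L - l) m"
      have B2: "?B2 = ?h ` (SIGMA l:{..<L}. WA l ?A)"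
      proof (intro set_eqI iffI)
        fix b assume "b \<in> ?B2"
        then have b: "length b = L" "set b \<subseteq> {..m}" "ok (a @ m # b)" "m \<in> set b"
          unfolding Bset_def by auto
        have sp: "ok b" "set b \<inter> Fs a = {}" "\<forall>j l. j < l \<and> l < length b \<and> b!j = m \<longrightarrow> b!l = m"
          using ok_split[OF A b(2)] b(3) by auto
        define g where "g = takeWhile (\<lambda>x. x \<noteq> m) b"
        define t where "t = length b - length g"
        have bf: "b = g @ replicate t m" using tail_form[OF sp(3)] unfolding g_def t_def .
        have "length g \<noteq> length b"
        proof
          assume "length g = length b"
          have "g = take (length g) b" unfolding g_def by (rule takeWhile_eq_take)
          also have "\<dots> = b" using \<open>length g = length b\<close> by simp
          finally have "m \<in> set g" using b(4) by simp
          then show False unfolding g_def using set_takeWhileD by fastforce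
        qed
        moreover have "length g \<le> length b" unfolding g_def by (rule length_takeWhile_le)
        ultimately have lg: "length g < L" using b(1) by simp
        have "ok (g @ replicate t m)" using sp(1) bf by simp
        then have okg: "ok g" by (rule ok_prefix)
        have sg: "set g \<subseteq> set b" unfolding g_def using set_takeWhileD by fastforce
        have mg: "m \<notin> set g" unfolding g_def using set_takeWhileD by fastforce
        have "set g \<subseteq> ?A" using sg mg b(2) sp(2) by (auto simp: le_less)
        then have "(length g, g) \<in> (SIGMA l:{..<L}. WA l ?A)" using lg okg unfolding WA_def by simp
        moreover have "b = ?h (length g, g)"
        proof -
          have "length b = length g + t" using bf by simp
          then have "t = L - length g" using b(1) by simp
          then show ?thesis using bf by simp
        qed
        ultimately show "b \<in> ?h ` (SIGMA l:{..<L}. WA l ?A)" by blast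
      next
        fix b assume "b \<in> ?h ` (SIGMA l:{..<L}. WA l ?A)"
        then obtain x where x: "x \<in> (SIGMA l:{..<L}. WA l ?A)" "b = ?h x" by (rule imageE)
        obtain l g where xlg: "x = (l, g)" by (cases x)
        have lg: "l < L" "g \<in> WA l ?A" "b = g @ replicate (L - l) m" using x xlg by auto
        have g: "length g = l" "set g \<subseteq> ?A" "ok g" using lg(2) unfolding WA_def by auto
        have gl: "\<forall>x\<in>set g. x < m" using g(2) by auto
        have mg: "m \<notin> set g" using gl by auto
        have sb: "set b = set g \<union> {m}" using lg(1,3) by auto
        have bm: "set b \<subseteq> {..m}" using sb gl by auto
        have okb: "ok b" using ok_rep[OF g(3) gl] lg(3) by simp
        have dj: "set b \<inter> Fs a = {}" using sb g(2) mFa by blast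
        have tl: "\<forall>j l. j < l \<and> l < length b \<and> b!j = m \<longrightarrow> b!l = m" using tail_rep[OF mg] lg(3) by simp
        have okw: "ok (a @ m # b)" using ok_split[OF A bm] oka okb dj tl by simp
        have "Fs (a @ m # b) = {..m}" using Fs_twice[OF A bm] sb by simp
        then have "card (Fs (a @ m # b)) = f" using f by simp
        moreover have "length b = L" using lg g by simp
        ultimately show "b \<in> ?B2" using bm okw sb unfolding Bset_def by simp
      qed
      have inj: "inj_on ?h (SIGMA l:{..<L}. WA l ?A)"
      proof (rule inj_onI)
        fix x y assume x: "x \<in> (SIGMA l:{..<L}. WA l ?A)" and y: "y \<in> (SIGMA l:{..<L}. WA l ?A)"
          and e: "?h x = ?h y"
        obtain l g where xx: "x = (l, g)" "l < L" "g \<in> WA l ?A" using x by blast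
        obtain l' g' where yy: "y = (l', g')" "l' < L" "g' \<in> WA l' ?A" using y by blast
        have mg: "m \<notin> set g" "m \<notin> set g'" using xx yy unfolding WA_def by auto
        have "takeWhile (\<lambda>x. x \<noteq> m) (g @ replicate (L - l) m) = g" using takeWhile_rep[OF mg(1)] xx by simp
        moreover have "takeWhile (\<lambda>x. x \<noteq> m) (g' @ replicate (L - l') m) = g'" using takeWhile_rep[OF mg(2)] yy by simp
        ultimately have "g = g'" using e xx yy by simp
        then show "x = y" using xx yy unfolding WA_def by simp
      qed
      have "card ?B2 = card (SIGMA l:{..<L}. WA l ?A)" using B2 inj by (simp add: card_image)
      also have "\<dots> = (\<Sum>l<L. card (WA l ?A))"
        by (rule card_SigmaI) (auto intro: finite_subset[OF _ finite_words] simp: WA_def)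
      also have "\<dots> = (\<Sum>l<L. kk l (m - ?i))" using card_WA[OF finA] cardA by simp
      finally show ?thesis using f by simp
    qed
    show ?thesis using True cardsplit cB1 cB2 by simp
  qed
qed




definition Sw :: "nat \<Rightarrow> nat \<Rightarrow> nat \<Rightarrow> nat list set" where
  "Sw n k f = {w. length w = n \<and> set w \<subseteq> {..<k} \<and> ok w \<and> card (Fs w) = f}"

definition Wpm :: "nat \<Rightarrow> nat \<Rightarrow> nat \<Rightarrow> nat \<Rightarrow> nat \<Rightarrow> nat list set" where
  "Wpm n k f p m = {w \<in> Sw n k f. \<exists>a b. w = a @ m # b \<and> length a = p - 1 \<and> set a \<subseteq> {..<m} \<and> set b \<subseteq> {..m}}"

lemma jj_Sw: "jj n k f = card (Sw n k f)"
proof -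
  have "WAg n {..<k} f = Sw n k f"
  proof (intro set_eqI iffI)
    fix w assume "w \<in> WAg n {..<k} f"
    then have h: "length w = n" "set w \<subseteq> {..<k}" "ok w" "card (Fs w \<inter> {..<k}) = f" unfolding WAg_def by auto
    have "Fs w \<inter> {..<k} = Fs w" using Fs_sub[OF h(2)] by blast
    then show "w \<in> Sw n k f" using h unfolding Sw_def by simp
  next
    fix w assume "w \<in> Sw n k f"
    then have h: "length w = n" "set w \<subseteq> {..<k}" "ok w" "card (Fs w) = f" unfolding Sw_def by auto
    have "Fs w \<inter> {..<k} = Fs w" using Fs_sub[OF h(2)] by blast
    then show "w \<in> WAg n {..<k} f" using h unfolding WAg_def by simp
  qed
  then show ?thesis using jj_alt by simp
qed

lemma finite_Sw: "finite (Sw n k f)"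
  by (rule finite_subset[OF _ finite_words[of n k]]) (auto simp: Sw_def)

lemma split_unique:
  assumes A: "set a \<subseteq> {..<m}" and B: "set b \<subseteq> {..m}"
  shows "Max (set (a @ m # b)) = m" "takeWhile (\<lambda>x. x \<noteq> m) (a @ m # b) = a"
proof -
  show "Max (set (a @ m # b)) = m"
  proof (rule Max_eqI)
    fix y assume "y \<in> set (a @ m # b)"
    then show "y \<le> m" using A B by auto
  qed auto
  have "\<And>x. x \<in> set a \<Longrightarrow> x \<noteq> m" using A by auto
  then have "takeWhile (\<lambda>x. x \<noteq> m) (a @ m # b) = a @ takeWhile (\<lambda>x. x \<noteq> m) (m # b)"
    by (rule takeWhile_append2)
  then show "takeWhile (\<lambda>x. x \<noteq> m) (a @ m # b) = a" by simp
qed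

lemma Wpm_unique:
  assumes "w \<in> Wpm n k f p m" "w \<in> Wpm n k f p' m'" "p \<ge> 1" "p' \<ge> 1"
  shows "p = p' \<and> m = m'"
proof -
  obtain a b where ab: "w = a @ m # b" "length a = p - 1" "set a \<subseteq> {..<m}" "set b \<subseteq> {..m}"
    using assms(1) unfolding Wpm_def by blast
  obtain a' b' where ab': "w = a' @ m' # b'" "length a' = p' - 1" "set a' \<subseteq> {..<m'}" "set b' \<subseteq> {..m'}"
    using assms(2) unfolding Wpm_def by blast
  have e1: "Max (set w) = m" unfolding ab(1) by (rule split_unique(1)[OF ab(3,4)])
  have e2: "Max (set w) = m'" unfolding ab'(1) by (rule split_unique(1)[OF ab'(3,4)])
  have "m = m'" using e1 e2 by simp
  have t1: "takeWhile (\<lambda>x. x \<noteq> m) w = a" unfolding ab(1) by (rule split_unique(2)[OF ab(3,4)])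
  have t2: "takeWhile (\<lambda>x. x \<noteq> m') w = a'" unfolding ab'(1) by (rule split_unique(2)[OF ab'(3,4)])
  have "a = a'" using t1 t2 \<open>m = m'\<close> by simp
  then have "p = p'" using ab(2) ab'(2) assms(3,4) by simp
  then show ?thesis using \<open>m = m'\<close> by simp
qed

lemma Sw_cover:
  assumes n: "n \<ge> 1"
  shows "Sw n k f = (\<Union>p\<in>{1..n}. \<Union>m\<in>{..<k}. Wpm n k f p m)"
proof (intro set_eqI iffI)
  fix w assume w: "w \<in> Sw n k f"
  then have wl: "length w = n" "set w \<subseteq> {..<k}" unfolding Sw_def by auto
  then have "w \<noteq> []" using n by auto
  define m where "m = Max (set w)"
  have mw: "m \<in> set w" unfolding m_def using \<open>w \<noteq> []\<close> by simp
  from in_set_conv_decomp_first[THEN iffD1, OF mw]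
  obtain a b where ab: "w = a @ m # b" "m \<notin> set a" by (elim exE conjE)
  have le: "\<And>x. x \<in> set w \<Longrightarrow> x \<le> m" unfolding m_def by simp
  have A: "set a \<subseteq> {..<m}"
  proof
    fix x assume "x \<in> set a"
    then have "x \<le> m" "x \<noteq> m" using le ab by auto
    then show "x \<in> {..<m}" by simp
  qed
  have B: "set b \<subseteq> {..m}"
  proof
    fix x assume "x \<in> set b"
    then have "x \<le> m" using le ab by auto
    then show "x \<in> {..m}" by simp
  qed
  have mk: "m < k" using mw wl by auto
  have p: "Suc (length a) \<in> {1..n}" using wl ab by auto
  have "\<exists>a' b'. w = a' @ m # b' \<and> length a' = Suc (length a) - 1 \<and> set a' \<subseteq> {..<m} \<and> set b' \<subseteq> {..m}"
    apply (rule exI[of _ a], rule exI[of _ b])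
    using ab A B by simp
  then have "w \<in> Wpm n k f (Suc (length a)) m" unfolding Wpm_def using w by simp
  then show "w \<in> (\<Union>p\<in>{1..n}. \<Union>m\<in>{..<k}. Wpm n k f p m)" using p mk by blast
next
  fix w assume "w \<in> (\<Union>p\<in>{1..n}. \<Union>m\<in>{..<k}. Wpm n k f p m)"
  then obtain p m where "w \<in> Wpm n k f p m" by blast
  then show "w \<in> Sw n k f" unfolding Wpm_def by simp
qed

lemma card_Wpm:
  assumes p: "p \<in> {1..n}" and mk: "m < k"
  shows "card (Wpm n k f p m) = (\<Sum>i<f. jj (p - 1) m i *
       (jj (n - p) (m - i) (f - i - 1) +
        (if f = m + 1 then 1 else 0) * (\<Sum>l<n - p. kk l (m - i))))"
proof -
  let ?U = "WA (p - 1) {..<m}"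
  let ?h = "\<lambda>(a, b). a @ m # b"
  let ?Y = "\<lambda>i. jj (n - p) (m - i) (f - i - 1) + (if f = m + 1 then 1 else 0) * (\<Sum>l<n - p. kk l (m - i))"
  have W: "Wpm n k f p m = ?h ` (SIGMA a:?U. Bset (n - p) m f a)"
  proof (intro set_eqI iffI)
    fix w assume "w \<in> Wpm n k f p m"
    then obtain a b where w: "w \<in> Sw n k f" "w = a @ m # b" "length a = p - 1" "set a \<subseteq> {..<m}" "set b \<subseteq> {..m}"
      unfolding Wpm_def by blast
    have wS: "length w = n" "ok w" "card (Fs w) = f" using w(1) unfolding Sw_def by auto
    have "ok a" using ok_split[OF w(4,5)] wS(2) w(2) by simp
    then have "a \<in> ?U" using w unfolding WA_def by simp
    moreover have "b \<in> Bset (n - p) m f a" using wS w p unfolding Bset_def by auto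
    ultimately have "(a, b) \<in> (SIGMA a:?U. Bset (n - p) m f a)" by simp
    moreover have "w = ?h (a, b)" using w(2) by simp
    ultimately show "w \<in> ?h ` (SIGMA a:?U. Bset (n - p) m f a)" by (rule rev_image_eqI)
  next
    fix w assume "w \<in> ?h ` (SIGMA a:?U. Bset (n - p) m f a)"
    then obtain x where x: "x \<in> (SIGMA a:?U. Bset (n - p) m f a)" "w = ?h x" by (rule imageE)
    obtain a b where xab: "x = (a, b)" by (cases x)
    have a: "length a = p - 1" "set a \<subseteq> {..<m}" "ok a" using x xab unfolding WA_def by auto
    have b: "length b = n - p" "set b \<subseteq> {..m}" "ok (a @ m # b)" "card (Fs (a @ m # b)) = f"
      using x xab unfolding Bset_def by auto
    have wab: "w = a @ m # b" using x xab by simp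
    have "set w \<subseteq> {..<k}" using wab a(2) b(2) mk by auto
    moreover have "length w = n" using wab a(1) b(1) p by auto
    ultimately have "w \<in> Sw n k f" using wab b unfolding Sw_def by simp
    then show "w \<in> Wpm n k f p m" unfolding Wpm_def using wab a b by blast
  qed
  have inj: "inj_on ?h (SIGMA a:?U. Bset (n - p) m f a)"
  proof (rule inj_onI)
    fix x y assume x: "x \<in> (SIGMA a:?U. Bset (n - p) m f a)" and y: "y \<in> (SIGMA a:?U. Bset (n - p) m f a)"
      and e: "?h x = ?h y"
    obtain a b where xab: "x = (a, b)" by (cases x)
    obtain a' b' where yab: "y = (a', b')" by (cases y)
    have "length a = length a'" using x y xab yab unfolding WA_def by auto
    then show "x = y" using e xab yab by simp
  qed
  have finU: "finite ?U" by (rule finite_subset[OF _ finite_words[of "p - 1" m]]) (auto simp: WA_def)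
  have "card (Wpm n k f p m) = card (SIGMA a:?U. Bset (n - p) m f a)" using W inj by (simp add: card_image)
  also have "\<dots> = (\<Sum>a\<in>?U. card (Bset (n - p) m f a))"
    using finU finite_Bset by (simp add: card_SigmaI)
  also have "\<dots> = (\<Sum>a\<in>?U. (if card (Fs a) < f then ?Y (card (Fs a)) else 0))"
    by (rule sum.cong[OF refl]) (rule card_Bset)
  also have "\<dots> = (\<Sum>a\<in>?U. \<Sum>i<f. (if card (Fs a) = i then ?Y i else 0))"
    by (rule sum.cong[OF refl]) (simp add: sum.delta')
  also have "\<dots> = (\<Sum>i<f. \<Sum>a\<in>?U. (if card (Fs a) = i then ?Y i else 0))"
    by (rule sum.swap)
  also have "\<dots> = (\<Sum>i<f. jj (p - 1) m i * ?Y i)"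
  proof (rule sum.cong[OF refl])
    fix i assume "i \<in> {..<f}"
    have "(\<Sum>a\<in>?U. (if card (Fs a) = i then ?Y i else 0)) = (\<Sum>a\<in>{a\<in>?U. card (Fs a) = i}. ?Y i)"
      by (rule sum.inter_filter[OF finU, symmetric])
    also have "\<dots> = card {a\<in>?U. card (Fs a) = i} * ?Y i" by simp
    also have "{a\<in>?U. card (Fs a) = i} = Sw (p - 1) m i" unfolding WA_def Sw_def by auto
    finally show "(\<Sum>a\<in>?U. (if card (Fs a) = i then ?Y i else 0)) = jj (p - 1) m i * ?Y i"
      using jj_Sw by simp
  qed
  finally show ?thesis .
qed

theorem mainTheorem12:
  fixes n k f :: nat
  assumes "n \<ge> 1"
  shows "jj n k f =
    (\<Sum>p=1..n. \<Sum>i<f. \<Sum>m<k.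
       jj (p - 1) m i *
       (jj (n - p) (m - i) (f - i - 1) +
        (if f = m + 1 then 1 else 0) * (\<Sum>l<n - p. kk l (m - i))))"
proof -
  have finW: "\<And>p m. finite (Wpm n k f p m)"
    by (rule finite_subset[OF _ finite_Sw]) (auto simp: Wpm_def)
  have "jj n k f = card (\<Union>p\<in>{1..n}. \<Union>m\<in>{..<k}. Wpm n k f p m)"
    using jj_Sw Sw_cover[OF assms] by simp
  also have "\<dots> = (\<Sum>p=1..n. card (\<Union>m\<in>{..<k}. Wpm n k f p m))"
  proof (rule card_UN_disjoint)
    show "finite {1..n}" by simp
    show "\<forall>p\<in>{1..n}. finite (\<Union>m\<in>{..<k}. Wpm n k f p m)" using finW by simp
    show "\<forall>p\<in>{1..n}. \<forall>q\<in>{1..n}. p \<noteq> q \<longrightarrow> (\<Union>m\<in>{..<k}. Wpm n k f p m) \<inter> (\<Union>m\<in>{..<k}. Wpm n k f q m) = {}"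
    proof (intro ballI impI equals0I)
      fix p q w assume pq: "p \<in> {1..n}" "q \<in> {1..n}" "p \<noteq> q"
        and w: "w \<in> (\<Union>m\<in>{..<k}. Wpm n k f p m) \<inter> (\<Union>m\<in>{..<k}. Wpm n k f q m)"
      then obtain m m' where "w \<in> Wpm n k f p m" "w \<in> Wpm n k f q m'" by blast
      then have "p = q" using Wpm_unique pq by auto
      then show False using pq by simp
    qed
  qed
  also have "\<dots> = (\<Sum>p=1..n. \<Sum>m<k. card (Wpm n k f p m))"
  proof (rule sum.cong[OF refl])
    fix p assume p: "p \<in> {1..n}"
    show "card (\<Union>m\<in>{..<k}. Wpm n k f p m) = (\<Sum>m<k. card (Wpm n k f p m))"
    proof (rule card_UN_disjoint)
      show "finite {..<k}" by simp
      show "\<forall>m\<in>{..<k}. finite (Wpm n k f p m)" using finW by simp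
      show "\<forall>m\<in>{..<k}. \<forall>m'\<in>{..<k}. m \<noteq> m' \<longrightarrow> Wpm n k f p m \<inter> Wpm n k f p m' = {}"
      proof (intro ballI impI equals0I)
        fix m m' w assume mm: "m \<in> {..<k}" "m' \<in> {..<k}" "m \<noteq> m'"
          and w: "w \<in> Wpm n k f p m \<inter> Wpm n k f p m'"
        then have "m = m'" using Wpm_unique[of w n k f p m p m'] p by auto
        then show False using mm by simp
      qed
    qed
  qed
  also have "\<dots> = (\<Sum>p=1..n. \<Sum>m<k. \<Sum>i<f. jj (p - 1) m i *
       (jj (n - p) (m - i) (f - i - 1) +
        (if f = m + 1 then 1 else 0) * (\<Sum>l<n - p. kk l (m - i))))"
    by (rule sum.cong[OF refl], rule sum.cong[OF refl]) (rule card_Wpm, auto)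
  also have "\<dots> = (\<Sum>p=1..n. \<Sum>i<f. \<Sum>m<k. jj (p - 1) m i *
       (jj (n - p) (m - i) (f - i - 1) +
        (if f = m + 1 then 1 else 0) * (\<Sum>l<n - p. kk l (m - i))))"
    by (rule sum.cong[OF refl]) (rule sum.swap)
  finally show ?thesis .
qed


end
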